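(* Let $R$ be a separative regular ring in which $2$ is invertible. Then every $a\in R$ satisfying $Rar(a^2)=\ell(a^2)aR=R(1-a^2)R$ is special clean, i.e., there exists an idempotent $e\in R$ such that $a-e$ is a unit of $R$ and $aR\cap eR=0$.
   Context: All rings are associative with identity; modules are right modules. $R$ is regular if every $x\in R$ satisfies $x=xyx$ for some $y\in R$. $R$ is separative if for all finitely generated projective right $R$-modules $A,B$: $A\oplus A\cong A\oplus B\cong B\oplus B$ implies $A\cong B$. For $x\in R$, $r(x)=\{y\in R: xy=0\}$ and $\ell(x)=\{y\in R: yx=0\}$. $Rar(a^2)$, $\ell(a^2)aR$, $R(1-a^2)R$ denote the two-sided ideals generated by $ar(a^2)=\{ay:y\in r(a^2)\}$, $\ell(a^2)a$, and $1-a^2$ respectively. *)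

theory Defs
  imports Main
begin

(* Matrices over R: functions nat => nat => 'a; only entries with row index < rows and
   column index < cols are relevant. *)

definition mat_mul :: "nat \<Rightarrow> (nat \<Rightarrow> nat \<Rightarrow> 'a::ring_1) \<Rightarrow> (nat \<Rightarrow> nat \<Rightarrow> 'a) \<Rightarrow> nat \<Rightarrow> nat \<Rightarrow> 'a"
  where "mat_mul k A B = (\<lambda>i j. \<Sum>l<k. A i l * B l j)"

definition mat_eq :: "nat \<Rightarrow> nat \<Rightarrow> (nat \<Rightarrow> nat \<Rightarrow> 'a) \<Rightarrow> (nat \<Rightarrow> nat \<Rightarrow> 'a) \<Rightarrow> bool"
  where "mat_eq p q A B = (\<forall>i<p. \<forall>j<q. A i j = B i j)"

definition idem_mat :: "nat \<Rightarrow> (nat \<Rightarrow> nat \<Rightarrow> 'a::ring_1) \<Rightarrow> bool"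
  where "idem_mat n E = mat_eq n n (mat_mul n E E) E"

(* The f.g. projective right modules E R^n and F R^m are isomorphic:
   there are X (m x n), Y (n x m) with X = F X E, Y = E Y F, Y X = E, X Y = F. *)
definition mat_iso :: "nat \<Rightarrow> (nat \<Rightarrow> nat \<Rightarrow> 'a::ring_1) \<Rightarrow> nat \<Rightarrow> (nat \<Rightarrow> nat \<Rightarrow> 'a) \<Rightarrow> bool"
  where "mat_iso n E m F = (\<exists>X Y.
      mat_eq m n (mat_mul m F (mat_mul n X E)) X \<and>
      mat_eq n m (mat_mul n E (mat_mul m Y F)) Y \<and>
      mat_eq n n (mat_mul m Y X) E \<and>
      mat_eq m m (mat_mul n X Y) F)"

(* block diagonal diag(E,F) with E of size n: corresponds to the direct sum *)
definition block_diag :: "nat \<Rightarrow> (nat \<Rightarrow> nat \<Rightarrow> 'a::zero) \<Rightarrow> (nat \<Rightarrow> nat \<Rightarrow> 'a) \<Rightarrow> nat \<Rightarrow> nat \<Rightarrow> 'a"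
  where "block_diag n E F = (\<lambda>i j. if i < n \<and> j < n then E i j
                                  else if n \<le> i \<and> n \<le> j then F (i - n) (j - n) else 0)"

(* Every f.g. projective right R-module is isomorphic to E R^n for an idempotent
   n x n matrix E; direct sums correspond to block diagonal matrices. *)
definition separative :: "'a::ring_1 itself \<Rightarrow> bool"
  where "separative _ = (\<forall>n m (E::nat \<Rightarrow> nat \<Rightarrow> 'a) F.
      idem_mat n E \<and> idem_mat m F \<and>
      mat_iso (n + n) (block_diag n E E) (n + m) (block_diag n E F) \<and>
      mat_iso (n + m) (block_diag n E F) (m + m) (block_diag m F F)
      \<longrightarrow> mat_iso n E m F)"

definition regular_ring :: "'a::ring_1 itself \<Rightarrow> bool"
  where "regular_ring _ = (\<forall>x::'a. \<exists>y. x = x * y * x)"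

definition unit_elem :: "'a::ring_1 \<Rightarrow> bool"
  where "unit_elem u = (\<exists>v. u * v = 1 \<and> v * u = 1)"

definition idempotent :: "'a::ring_1 \<Rightarrow> bool"
  where "idempotent e = (e * e = e)"

definition r_ann :: "'a::ring_1 \<Rightarrow> 'a set" where "r_ann x = {y. x * y = 0}"
definition l_ann :: "'a::ring_1 \<Rightarrow> 'a set" where "l_ann x = {y. y * x = 0}"

definition tsideal_gen :: "'a::ring_1 set \<Rightarrow> 'a set"
  where "tsideal_gen S = {x. \<exists>(k::nat) r s t. (\<forall>i<k. s i \<in> S) \<and> x = (\<Sum>i<k. r i * s i * t i)}"

definition special_clean :: "'a::ring_1 \<Rightarrow> bool"
  where "special_clean a = (\<exists>e. idempotent e \<and> unit_elem (a - e) \<and>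
            {a * r | r. True} \<inter> {e * r | r. True} = {0})"

end

theory Submission
  imports Defs
begin

definition Zm :: "nat \<Rightarrow> nat \<Rightarrow> 'a::ring_1" where "Zm = (\<lambda>i j. 0)"
definition madd :: "(nat \<Rightarrow> nat \<Rightarrow> 'a::ring_1) \<Rightarrow> _ \<Rightarrow> _" where "madd A B = (\<lambda>i j. A i j + B i j)"
definition blk :: "nat \<Rightarrow> nat \<Rightarrow> (nat \<Rightarrow> nat \<Rightarrow> 'a) \<Rightarrow> (nat \<Rightarrow> nat \<Rightarrow> 'a) \<Rightarrow> (nat \<Rightarrow> nat \<Rightarrow> 'a) \<Rightarrow> (nat \<Rightarrow> nat \<Rightarrow> 'a) \<Rightarrow> nat \<Rightarrow> nat \<Rightarrow> 'a"
  where "blk r c A B C D = (\<lambda>i j. if i < r then (if j < c then A i j else B i (j - c))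
                                  else (if j < c then C (i - r) j else D (i - r) (j - c)))"

lemma sum_split_add: fixes c c' :: nat shows "(\<Sum>l<c + c'. f l) = (\<Sum>l<c. f l) + (\<Sum>l<c'. f (c + l))"
  by (induct c') (auto simp: add.assoc)

lemma mm_assoc: "mat_mul k A (mat_mul l B C) = mat_mul l (mat_mul k A B) C"
  unfolding mat_mul_def
  by (auto simp: fun_eq_iff sum_distrib_left sum_distrib_right mult.assoc intro: sum.swap)

lemma mm_blk: "mat_mul (c + c') (blk r c A B C D) (blk c s A' B' C' D') =
  blk r s (madd (mat_mul c A A') (mat_mul c' B C')) (madd (mat_mul c A B') (mat_mul c' B D'))
          (madd (mat_mul c C A') (mat_mul c' D C')) (madd (mat_mul c C B') (mat_mul c' D D'))"
  unfolding mat_mul_def blk_def madd_def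
  by (auto simp: fun_eq_iff sum_split_add)

lemma mm_Z1[simp]: "mat_mul k Zm A = Zm" and mm_Z2[simp]: "mat_mul k A Zm = Zm"
  by (auto simp: mat_mul_def Zm_def fun_eq_iff)
lemma madd_Z[simp]: "madd A Zm = A" "madd Zm A = A"
  by (auto simp: madd_def Zm_def fun_eq_iff)

lemma bd_blk: "block_diag n E F = blk n n E Zm Zm F"
  by (auto simp: block_diag_def blk_def Zm_def fun_eq_iff)

lemma bd_assoc: "block_diag (n + m) (block_diag n E F) G = block_diag n E (block_diag m F G)"
  by (auto simp: block_diag_def fun_eq_iff)

lemma bd_zero: "block_diag 0 E F = F"
  by (auto simp: block_diag_def fun_eq_iff)

definition rowz :: "nat \<Rightarrow> (nat \<Rightarrow> nat \<Rightarrow> 'a::ring_1) \<Rightarrow> bool" where "rowz p A = (\<forall>i j. p \<le> i \<longrightarrow> A i j = 0)"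
definition colz :: "nat \<Rightarrow> (nat \<Rightarrow> nat \<Rightarrow> 'a::ring_1) \<Rightarrow> bool" where "colz q A = (\<forall>i j. q \<le> j \<longrightarrow> A i j = 0)"
definition ob :: "nat \<Rightarrow> (nat \<Rightarrow> nat \<Rightarrow> 'a::ring_1) \<Rightarrow> bool" where
  "ob n E = (rowz n E \<and> colz n E \<and> mat_mul n E E = E)"
definition iso :: "nat \<Rightarrow> (nat \<Rightarrow> nat \<Rightarrow> 'a::ring_1) \<Rightarrow> nat \<Rightarrow> (nat \<Rightarrow> nat \<Rightarrow> 'a) \<Rightarrow> bool" where
  "iso n E m F = (\<exists>X Y. mat_mul n X E = X \<and> mat_mul m Y F = Y \<and> mat_mul m Y X = E \<and> mat_mul n X Y = F)"

lemma rowz_mm: "rowz p A \<Longrightarrow> rowz p (mat_mul k A B)"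
  by (auto simp: rowz_def mat_mul_def)
lemma colz_mm: "colz q B \<Longrightarrow> colz q (mat_mul k A B)"
  by (auto simp: colz_def mat_mul_def)

lemma iso_mat_iso: assumes "iso n E m F" shows "mat_iso n E m F"
proof -
  obtain X Y where h: "mat_mul n X E = X" "mat_mul m Y F = Y" "mat_mul m Y X = E" "mat_mul n X Y = F"
    using assms unfolding iso_def by blast
  have fx: "mat_mul m F X = X"
    by (metis h(1) h(3) h(4) mm_assoc)
  have ey: "mat_mul n E Y = Y"
    by (metis h(2) h(3) h(4) mm_assoc)
  show ?thesis unfolding mat_iso_def mat_eq_def
    by (rule exI[of _ X], rule exI[of _ Y]) (simp add: h fx ey)
qed

lemma mat_iso_iso: assumes E: "ob n E" and F: "ob m F" and mi: "mat_iso n E m F" shows "iso n E m F"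
proof -
  obtain X Y where h: "mat_eq m n (mat_mul m F (mat_mul n X E)) X"
      "mat_eq n m (mat_mul n E (mat_mul m Y F)) Y"
      "mat_eq n n (mat_mul m Y X) E" "mat_eq m m (mat_mul n X Y) F"
    using mi unfolding mat_iso_def by blast
  define X' where "X' = mat_mul m F (mat_mul n X E)"
  define Y' where "Y' = mat_mul n E (mat_mul m Y F)"
  have EE: "mat_mul n E E = E" and FF: "mat_mul m F F = F" using E F by (auto simp: ob_def)
  have rE: "rowz n E" "colz n E" and rF: "rowz m F" "colz m F" using E F by (auto simp: ob_def)
  have X'r: "rowz m X'" unfolding X'_def by (rule rowz_mm, rule rF)
  have X'c: "colz n X'" unfolding X'_def by (rule colz_mm, rule colz_mm, rule rE)
  have Y'r: "rowz n Y'" unfolding Y'_def by (rule rowz_mm, rule rE)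
  have Y'c: "colz m Y'" unfolding Y'_def by (rule colz_mm, rule colz_mm, rule rF)
  have X'X: "\<And>i j. i < m \<Longrightarrow> j < n \<Longrightarrow> X' i j = X i j" using h(1) unfolding mat_eq_def X'_def by blast
  have Y'Y: "\<And>i j. i < n \<Longrightarrow> j < m \<Longrightarrow> Y' i j = Y i j" using h(2) unfolding mat_eq_def Y'_def by blast
  have 1: "mat_mul n X' E = X'"
    unfolding X'_def by (metis EE mm_assoc)
  have 2: "mat_mul m Y' F = Y'"
    unfolding Y'_def by (metis FF mm_assoc)
  have 3: "mat_mul m Y' X' = E"
  proof (rule ext, rule ext)
    fix i j
    show "mat_mul m Y' X' i j = E i j"
    proof (cases "i < n \<and> j < n")
      case True
      then have "mat_mul m Y' X' i j = mat_mul m Y X i j"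
        unfolding mat_mul_def by (intro sum.cong) (auto simp: X'X Y'Y)
      then show ?thesis using h(3) True unfolding mat_eq_def by auto
    next
      case False
      then show ?thesis using X'c Y'r rE unfolding mat_mul_def rowz_def colz_def
        by (auto simp: not_less)
    qed
  qed
  have 4: "mat_mul n X' Y' = F"
  proof (rule ext, rule ext)
    fix i j
    show "mat_mul n X' Y' i j = F i j"
    proof (cases "i < m \<and> j < m")
      case True
      then have "mat_mul n X' Y' i j = mat_mul n X Y i j"
        unfolding mat_mul_def by (intro sum.cong) (auto simp: X'X Y'Y)
      then show ?thesis using h(4) True unfolding mat_eq_def by auto
    next
      case False
      then show ?thesis using X'r Y'c rF unfolding mat_mul_def rowz_def colz_def
        by (auto simp: not_less)
    qed
  qed
  show ?thesis unfolding iso_def using 1 2 3 4 by blast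
qed

lemma iso_refl: "ob n E \<Longrightarrow> iso n E n E"
  unfolding iso_def ob_def by blast

lemma iso_sym: "iso n E m F \<Longrightarrow> iso m F n E"
  unfolding iso_def by blast

lemma iso_trans: assumes "iso n E m F" "iso m F k G" shows "iso n E k G"
proof -
  obtain X Y where h: "mat_mul n X E = X" "mat_mul m Y F = Y" "mat_mul m Y X = E" "mat_mul n X Y = F"
    using assms(1) unfolding iso_def by blast
  obtain X' Y' where h': "mat_mul m X' F = X'" "mat_mul k Y' G = Y'" "mat_mul k Y' X' = F" "mat_mul m X' Y' = G"
    using assms(2) unfolding iso_def by blast
  have fx: "mat_mul m F X = X" by (metis h(1) h(3) h(4) mm_assoc)
  have fy: "mat_mul m F Y' = Y'" by (metis h'(2) h'(3) h'(4) mm_assoc)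
  have 1: "mat_mul n (mat_mul m X' X) E = mat_mul m X' X" by (metis h(1) mm_assoc)
  have 2: "mat_mul k (mat_mul m Y Y') G = mat_mul m Y Y'" by (metis h'(2) mm_assoc)
  have 3: "mat_mul k (mat_mul m Y Y') (mat_mul m X' X) = E"
    by (metis fx h'(3) h(3) mm_assoc)
  have 4: "mat_mul n (mat_mul m X' X) (mat_mul m Y Y') = G"
    by (metis fy h'(4) h(4) mm_assoc)
  show ?thesis unfolding iso_def using 1 2 3 4 by blast
qed

lemma iso_plus: assumes "iso n E m F" "iso n' E' m' F'"
  shows "iso (n + n') (block_diag n E E') (m + m') (block_diag m F F')"
proof -
  obtain X Y where h: "mat_mul n X E = X" "mat_mul m Y F = Y" "mat_mul m Y X = E" "mat_mul n X Y = F"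
    using assms(1) unfolding iso_def by blast
  obtain X' Y' where h': "mat_mul n' X' E' = X'" "mat_mul m' Y' F' = Y'" "mat_mul m' Y' X' = E'" "mat_mul n' X' Y' = F'"
    using assms(2) unfolding iso_def by blast
  show ?thesis unfolding iso_def bd_blk
    by (rule exI[of _ "blk m n X Zm Zm X'"], rule exI[of _ "blk n m Y Zm Zm Y'"])
       (simp add: mm_blk h h')
qed

lemma iso_comm: assumes "ob n E" "ob m F"
  shows "iso (n + m) (block_diag n E F) (m + n) (block_diag m F E)"
proof -
  have e: "mat_mul n E E = E" and f: "mat_mul m F F = F" using assms by (auto simp: ob_def)
  have 1: "mat_mul (n + m) (blk m n Zm F E Zm) (blk n n E Zm Zm F) = blk m n Zm F E Zm"
    by (simp add: mm_blk e f)
  have 2: "mat_mul (m + n) (blk n m Zm E F Zm) (blk m m F Zm Zm E) = blk n m Zm E F Zm"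
    by (simp add: mm_blk e f)
  have 3: "mat_mul (m + n) (blk n m Zm E F Zm) (blk m n Zm F E Zm) = blk n n E Zm Zm F"
    by (simp add: mm_blk e f)
  have 4: "mat_mul (n + m) (blk m n Zm F E Zm) (blk n m Zm E F Zm) = blk m m F Zm Zm E"
    by (simp add: mm_blk e f)
  show ?thesis unfolding iso_def bd_blk
    by (rule exI[of _ "blk m n Zm F E Zm"], rule exI[of _ "blk n m Zm E F Zm"]) (simp add: 1 2 3 4)
qed

lemma ob_plus: assumes "ob n E" "ob m F" shows "ob (n + m) (block_diag n E F)"
proof -
  have "mat_mul n E E = E" "mat_mul m F F = F" using assms by (auto simp: ob_def)
  moreover have "rowz (n+m) (block_diag n E F)" "colz (n+m) (block_diag n E F)"
    using assms by (auto simp: ob_def rowz_def colz_def block_diag_def)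
  ultimately show ?thesis unfolding ob_def by (simp add: bd_blk mm_blk)
qed

type_synonym 'a obj = "nat \<times> (nat \<Rightarrow> nat \<Rightarrow> 'a)"

definition OB :: "'a::ring_1 obj \<Rightarrow> bool" where "OB x = ob (fst x) (snd x)"
definition ISO :: "'a::ring_1 obj \<Rightarrow> 'a obj \<Rightarrow> bool" where "ISO x y = iso (fst x) (snd x) (fst y) (snd y)"
definition pl :: "'a::ring_1 obj \<Rightarrow> 'a obj \<Rightarrow> 'a obj" where
  "pl x y = (fst x + fst y, block_diag (fst x) (snd x) (snd y))"
primrec rep :: "nat \<Rightarrow> 'a::ring_1 obj \<Rightarrow> 'a obj" where
  "rep 0 x = (0, Zm)" | "rep (Suc k) x = pl (rep k x) x"

lemma ISO_refl: "OB x \<Longrightarrow> ISO x x" by (simp add: OB_def ISO_def iso_refl)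
lemma ISO_sym: "ISO x y \<Longrightarrow> ISO y x" by (simp add: ISO_def iso_sym)
lemma ISO_trans: "ISO x y \<Longrightarrow> ISO y z \<Longrightarrow> ISO x z" unfolding ISO_def by (rule iso_trans)
lemma ISO_pl: "ISO x x' \<Longrightarrow> ISO y y' \<Longrightarrow> ISO (pl x y) (pl x' y')"
  unfolding ISO_def pl_def by (simp add: iso_plus)
lemma ISO_comm: "OB x \<Longrightarrow> OB y \<Longrightarrow> ISO (pl x y) (pl y x)"
  unfolding ISO_def pl_def OB_def by (simp add: iso_comm)
lemma pl_assoc: "pl (pl x y) z = pl x (pl y z)"
  unfolding pl_def by (simp add: bd_assoc add.assoc)
lemma OB_pl: "OB x \<Longrightarrow> OB y \<Longrightarrow> OB (pl x y)"
  unfolding OB_def pl_def by (simp add: ob_plus)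
lemma OB_Z: "OB ((0, Zm)::'a::ring_1 obj)"
  by (auto simp: OB_def ob_def rowz_def colz_def Zm_def mat_mul_def)
lemma OB_rep: "OB x \<Longrightarrow> OB (rep k x)"
  by (induction k) (simp_all add: OB_pl OB_Z)
lemma rep1: "rep 1 x = x"
  by (simp add: pl_def bd_zero)

lemma sepISO: assumes sep: "separative TYPE('a::ring_1)" and x: "OB (x::'a obj)" and y: "OB y"
  and h1: "ISO (pl x x) (pl x y)" and h2: "ISO (pl x y) (pl y y)" shows "ISO x y"
proof -
  obtain n E where xe: "x = (n, E)" by (cases x)
  obtain m F where yf: "y = (m, F)" by (cases y)
  have oE: "ob n E" and oF: "ob m F" using x y xe yf by (auto simp: OB_def)
  have "idem_mat n E" "idem_mat m F" using oE oF by (auto simp: ob_def idem_mat_def mat_eq_def)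
  moreover have "mat_iso (n + n) (block_diag n E E) (n + m) (block_diag n E F)"
    using h1 xe yf by (auto simp: ISO_def pl_def intro: iso_mat_iso)
  moreover have "mat_iso (n + m) (block_diag n E F) (m + m) (block_diag m F F)"
    using h2 xe yf by (auto simp: ISO_def pl_def intro: iso_mat_iso)
  ultimately have "mat_iso n E m F" using sep unfolding separative_def by blast
  then show ?thesis using oE oF xe yf by (simp add: ISO_def mat_iso_iso)
qed

lemma lemL: assumes sep: "separative TYPE('a::ring_1)"
  and ob: "OB (p::'a obj)" "OB q" "OB r" "OB x" "OB y"
  and h: "ISO (pl p q) (pl r q)" "ISO p (pl q x)" "ISO r (pl q y)"
  shows "ISO p r"
proof -
  have "ISO (pl p r) (pl p (pl q y))" by (rule ISO_pl[OF ISO_refl[OF ob(1)] h(3)])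
  also have "pl p (pl q y) = pl (pl p q) y" by (simp add: pl_assoc)
  finally have a1: "ISO (pl p r) (pl (pl p q) y)" .
  have a2: "ISO (pl (pl p q) y) (pl (pl r q) y)" by (rule ISO_pl[OF h(1) ISO_refl[OF ob(5)]])
  have a3: "ISO (pl r (pl q y)) (pl r r)" by (rule ISO_pl[OF ISO_refl[OF ob(3)] ISO_sym[OF h(3)]])
  have A: "ISO (pl p r) (pl r r)"
    using ISO_trans[OF ISO_trans[OF a1 a2]] a3 by (simp add: pl_assoc)
  have b1: "ISO (pl p r) (pl r p)" using ob by (simp add: ISO_comm)
  have b2: "ISO (pl r p) (pl r (pl q x))" by (rule ISO_pl[OF ISO_refl[OF ob(3)] h(2)])
  have b3: "ISO (pl (pl r q) x) (pl (pl p q) x)" by (rule ISO_pl[OF ISO_sym[OF h(1)] ISO_refl[OF ob(4)]])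
  have b4: "ISO (pl p (pl q x)) (pl p p)" by (rule ISO_pl[OF ISO_refl[OF ob(1)] ISO_sym[OF h(2)]])
  have B: "ISO (pl p r) (pl p p)"
  proof -
    have "ISO (pl p r) (pl r (pl q x))" using b1 b2 by (rule ISO_trans)
    then have "ISO (pl p r) (pl (pl p q) x)" using b3 unfolding pl_assoc by (rule ISO_trans)
    then show ?thesis using b4 unfolding pl_assoc by (rule ISO_trans)
  qed
  show ?thesis
    using ISO_sym[OF B] A by (rule sepISO[OF sep ob(1) ob(3)])
qed

lemma half_ind: assumes sep: "separative TYPE('a::ring_1)" and ob: "OB (a::'a obj)" "OB b"
  shows "ISO (rep (j+2) a) (pl b (rep (j+1) a)) \<Longrightarrow> ISO (pl a a) (pl b a)"
proof (induction j)
  case 0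
  then show ?case by (simp add: numeral_2_eq_2 rep1[simplified])
next
  case (Suc j)
  have obr: "\<And>k. OB (rep k a)" using ob by (simp add: OB_rep)
  have "ISO (rep (j+2) a) (pl b (rep (j+1) a))"
  proof (rule lemL[OF sep, of _ a _ "rep (j+1) a" "pl b (rep j a)"])
    show "OB (rep (j + 2) a)" "OB a" "OB (pl b (rep (j + 1) a))" "OB (rep (j + 1) a)" "OB (pl b (rep j a))"
      using ob obr by (auto simp: OB_pl)
    show "ISO (pl (rep (j + 2) a) a) (pl (pl b (rep (j + 1) a)) a)"
      using Suc.prems by (simp add: pl_assoc)
    show "ISO (rep (j + 2) a) (pl a (rep (j + 1) a))"
      using ISO_comm[OF obr[of "Suc j"] ob(1)] by simp
    have "ISO (pl (pl b (rep j a)) a) (pl a (pl b (rep j a)))"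
      using ob obr by (simp add: ISO_comm OB_pl)
    then show "ISO (pl b (rep (j + 1) a)) (pl a (pl b (rep j a)))"
      by (simp add: pl_assoc)
  qed
  then show ?case by (rule Suc.IH)
qed

lemma half: assumes sep: "separative TYPE('a::ring_1)" and ob: "OB (a::'a obj)" "OB b" "OB c" "OB d"
  and h1: "ISO (pl a c) (pl b c)" and h2: "ISO (rep n a) (pl c d)"
  shows "ISO (pl a a) (pl b a)"
proof -
  have obr: "\<And>k. OB (rep k a)" using ob by (simp add: OB_rep)
  have h2': "ISO (rep (Suc n) a) (pl c (pl d a))"
  proof -
    have "ISO (pl (rep n a) a) (pl (pl c d) a)" by (rule ISO_pl[OF h2 ISO_refl[OF ob(1)]])
    then show ?thesis by (simp add: pl_assoc)
  qed
  have ocd: "OB (pl d a)" using ob by (simp add: OB_pl)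
  have s1: "ISO (pl a (rep (Suc n) a)) (pl b (rep (Suc n) a))"
  proof -
    have "ISO (pl a (rep (Suc n) a)) (pl a (pl c (pl d a)))" by (rule ISO_pl[OF ISO_refl[OF ob(1)] h2'])
    moreover have "ISO (pl (pl a c) (pl d a)) (pl (pl b c) (pl d a))" by (rule ISO_pl[OF h1 ISO_refl[OF ocd]])
    moreover have "ISO (pl b (pl c (pl d a))) (pl b (rep (Suc n) a))" by (rule ISO_pl[OF ISO_refl[OF ob(2)] ISO_sym[OF h2']])
    ultimately show ?thesis unfolding pl_assoc[symmetric] by (metis ISO_trans)
  qed
  have "ISO (rep (Suc (Suc n)) a) (pl a (rep (Suc n) a))"
    using ISO_comm[OF obr[of "Suc n"] ob(1)] by simp
  then have "ISO (rep (n + 2) a) (pl b (rep (n+1) a))" using ISO_trans s1 by simp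
  then show ?thesis by (rule half_ind[OF sep ob(1) ob(2)])
qed

lemma cancel: assumes sep: "separative TYPE('a::ring_1)" and ob: "OB (a::'a obj)" "OB b" "OB c" "OB d" "OB d'"
  and h: "ISO (pl c a) (pl c b)" and ha: "ISO (rep n a) (pl c d)" and hb: "ISO (rep n' b) (pl c d')"
  shows "ISO a b"
proof -
  have h1: "ISO (pl a c) (pl b c)"
    using ISO_trans[OF ISO_trans[OF ISO_comm[OF ob(1) ob(3)] h] ISO_comm[OF ob(3) ob(2)]] .
  have A: "ISO (pl a a) (pl b a)" by (rule half[OF sep ob(1,2,3,4) h1 ha])
  have B: "ISO (pl b b) (pl a b)" by (rule half[OF sep ob(2,1,3,5) ISO_sym[OF h1] hb])
  show ?thesis
  proof (rule sepISO[OF sep ob(1) ob(2)])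
    show "ISO (pl a a) (pl a b)" using A ISO_comm[OF ob(2) ob(1)] by (rule ISO_trans)
    show "ISO (pl a b) (pl b b)" using B by (rule ISO_sym)
  qed
qed

definition E1 :: "'a::ring_1 \<Rightarrow> 'a obj" where "E1 e = (1, \<lambda>i j. if i = 0 \<and> j = 0 then e else 0)"

lemma mm1: "mat_mul 1 A B i j = A i 0 * B 0 j"
  by (simp add: mat_mul_def)

lemma OB_E1: "e * e = e \<Longrightarrow> OB (E1 e)"
  by (auto simp: OB_def ob_def E1_def rowz_def colz_def fun_eq_iff mat_mul_def)

lemma ISO_E1I: assumes "x * e = x" "y * f = y" "y * x = e" "x * y = f"
  shows "ISO (E1 e) (E1 f)"
  unfolding ISO_def E1_def iso_def
  by (rule exI[of _ "\<lambda>i j. if i = 0 \<and> j = 0 then x else 0"],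
      rule exI[of _ "\<lambda>i j. if i = 0 \<and> j = 0 then y else 0"])
     (auto simp: fun_eq_iff mat_mul_def assms)

lemma ISO_E1D: assumes "ISO (E1 e) (E1 f)"
  shows "\<exists>x y. x * e = x \<and> y * f = y \<and> y * x = e \<and> x * y = f"
proof -
  obtain X Y where h: "mat_mul 1 X (snd (E1 e)) = X" "mat_mul 1 Y (snd (E1 f)) = Y"
    "mat_mul 1 Y X = snd (E1 e)" "mat_mul 1 X Y = snd (E1 f)"
    using assms unfolding ISO_def iso_def E1_def by auto
  have "X 0 0 * e = X 0 0" using fun_cong[OF fun_cong[OF h(1), of 0], of 0] by (simp add: mat_mul_def E1_def)
  moreover have "Y 0 0 * f = Y 0 0" using fun_cong[OF fun_cong[OF h(2), of 0], of 0] by (simp add: mat_mul_def E1_def)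
  moreover have "Y 0 0 * X 0 0 = e" using fun_cong[OF fun_cong[OF h(3), of 0], of 0] by (simp add: mat_mul_def E1_def)
  moreover have "X 0 0 * Y 0 0 = f" using fun_cong[OF fun_cong[OF h(4), of 0], of 0] by (simp add: mat_mul_def E1_def)
  ultimately show ?thesis by blast
qed

lemma ISO_orth: assumes e: "e * e = e" and f: "f * f = f" and ef: "e * f = 0" and fe: "f * e = 0"
  shows "ISO (E1 (e + f)) (pl (E1 e) (E1 f))"
  unfolding ISO_def E1_def iso_def pl_def
  apply (rule exI[of _ "\<lambda>i j. if j = 0 then (if i = 0 then e else if i = 1 then f else 0) else 0"])
  apply (rule exI[of _ "\<lambda>i j. if i = 0 then (if j = 0 then e else if j = 1 then f else 0) else 0"])
  apply (auto simp: fun_eq_iff mm1 mat_mul_def numeral_2_eq_2 block_diag_def e f ef fe distrib_left distrib_right)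
  done

definition Dg :: "nat \<Rightarrow> 'a::ring_1 \<Rightarrow> nat \<Rightarrow> nat \<Rightarrow> 'a" where
  "Dg k e = (\<lambda>i j. if i = j \<and> i < k then e else 0)"

lemma rep_E1: "rep k (E1 e) = (k, Dg k e)"
  by (induction k) (auto simp: E1_def Dg_def pl_def block_diag_def fun_eq_iff Zm_def)

lemma sum_if_const: "(\<Sum>l\<in>A. if C then f l else 0) = (if C then sum f A else 0)"
  by (cases C) simp_all

lemma fst_E1: "fst (E1 c) = 1" by (simp add: E1_def)

lemma mm0[simp]: "mat_mul 0 A B = Zm" by (simp add: mat_mul_def Zm_def fun_eq_iff)

lemma Dg_blk: "Dg k e = blk k k (Dg k e) Zm Zm Zm"
  by (auto simp: Dg_def blk_def Zm_def fun_eq_iff)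

lemma mm_Dg_left: "mat_mul k (Dg k e) A i j = (if i < k then e * A i j else 0)"
proof -
  have "mat_mul k (Dg k e) A i j = (\<Sum>l<k. if l = i then e * A i j else 0)"
    unfolding mat_mul_def Dg_def by (intro sum.cong) auto
  then show ?thesis by simp
qed

lemma mm_Dg_right: "mat_mul k A (Dg k e) i j = (if j < k then A i j * e else 0)"
proof -
  have "mat_mul k A (Dg k e) i j = (\<Sum>l<k. if l = j then A i j * e else 0)"
    unfolding mat_mul_def Dg_def by (intro sum.cong) auto
  then show ?thesis by simp
qed

context
  fixes e c :: "'a::ring_1" and s p :: "nat \<Rightarrow> 'a" and k :: nat
  assumes ee: "e * e = e" and cc: "c * c = c"
    and es: "\<And>i. e * s i = s i" and sc: "\<And>i. s i * c = s i"
    and cp: "\<And>j. c * p j = p j" and pe: "\<And>j. p j * e = p j"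
    and psum: "(\<Sum>l<k. p l * s l) = c"
begin

definition "Pm = (\<lambda>i j. if i < k \<and> j < k then s i * p j else 0)"
definition "Qm = (\<lambda>i j. Dg k e i j - Pm i j)"
definition "Sm = (\<lambda>i j. if j = 0 \<and> i < k then s i else 0)"
definition "Tm = (\<lambda>i j. if i = 0 \<and> j < k then p j else 0)"

lemma sps: "s i * (c * p j) = s i * p j" using cp by simp

lemma mm_P_P: "mat_mul k Pm Pm = Pm"
proof (rule ext, rule ext)
  fix i j
  have "mat_mul k Pm Pm i j = (\<Sum>l<k. if i < k \<and> j < k then s i * (p l * s l) * p j else 0)"
    unfolding mat_mul_def Pm_def by (intro sum.cong) (auto simp: mult.assoc)
  also have "\<dots> = (if i < k \<and> j < k then s i * (\<Sum>l<k. p l * s l) * p j else 0)"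
    by (simp only: sum_if_const sum_distrib_left sum_distrib_right)
  also have "\<dots> = Pm i j" by (simp add: psum Pm_def mult.assoc sps)
  finally show "mat_mul k Pm Pm i j = Pm i j" .
qed

lemma mm_D_P: "mat_mul k (Dg k e) Pm = Pm"
  by (auto simp: fun_eq_iff mm_Dg_left Pm_def mult.assoc[symmetric] es)

lemma mm_P_D: "mat_mul k Pm (Dg k e) = Pm"
  by (auto simp: fun_eq_iff mm_Dg_right Pm_def mult.assoc pe)

lemma mm_D_D: "mat_mul k (Dg k e) (Dg k e) = Dg k e"
  by (rule ext, rule ext, simp only: mm_Dg_right) (auto simp: Dg_def ee)

lemma mm_sub_left: "mat_mul k (\<lambda>i j. A i j - B i j) C = (\<lambda>i j. mat_mul k A C i j - mat_mul k B C i j)"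
  by (auto simp: fun_eq_iff mat_mul_def left_diff_distrib sum_subtractf)
lemma mm_sub_right: "mat_mul k C (\<lambda>i j. A i j - B i j) = (\<lambda>i j. mat_mul k C A i j - mat_mul k C B i j)"
  by (auto simp: fun_eq_iff mat_mul_def right_diff_distrib sum_subtractf)

lemma mm_Q_Q: "mat_mul k Qm Qm = Qm"
  unfolding Qm_def mm_sub_left mm_sub_right
  by (simp add: mm_P_P mm_D_P mm_P_D mm_D_D)

lemma mm_Q_D: "mat_mul k Qm (Dg k e) = Qm"
  unfolding Qm_def mm_sub_left by (simp add: mm_P_D mm_D_D)

lemma mm_T_D: "mat_mul k Tm (Dg k e) = Tm"
  by (auto simp: fun_eq_iff mm_Dg_right Tm_def pe)

lemma mm_S_C: "mat_mul 1 Sm (snd (E1 c)) = Sm"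
  by (auto simp: fun_eq_iff mat_mul_def Sm_def E1_def sc)

lemma mm_T_S: "mat_mul k Tm Sm = snd (E1 c)"
proof (rule ext, rule ext)
  fix i j
  have "mat_mul k Tm Sm i j = (\<Sum>l<k. if i = 0 \<and> j = 0 then p l * s l else 0)"
    unfolding mat_mul_def Tm_def Sm_def by (intro sum.cong) auto
  then show "mat_mul k Tm Sm i j = snd (E1 c) i j" by (simp add: psum E1_def)
qed

lemma mm_T_P: "mat_mul k Tm Pm = Tm"
proof (rule ext, rule ext)
  fix i j
  have "mat_mul k Tm Pm i j = (\<Sum>l<k. if i = 0 \<and> j < k then (p l * s l) * p j else 0)"
    unfolding mat_mul_def Tm_def Pm_def by (intro sum.cong) (auto simp: mult.assoc)
  also have "\<dots> = (if i = 0 \<and> j < k then (\<Sum>l<k. p l * s l) * p j else 0)"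
    by (simp only: sum_if_const sum_distrib_right)
  finally show "mat_mul k Tm Pm i j = Tm i j" by (simp add: psum cp Tm_def)
qed

lemma mm_P_S: "mat_mul k Pm Sm = Sm"
proof (rule ext, rule ext)
  fix i j
  have "mat_mul k Pm Sm i j = (\<Sum>l<k. if i < k \<and> j = 0 then s i * (p l * s l) else 0)"
    unfolding mat_mul_def Sm_def Pm_def by (intro sum.cong) (auto simp: mult.assoc)
  also have "\<dots> = (if i < k \<and> j = 0 then s i * (\<Sum>l<k. p l * s l) else 0)"
    by (simp only: sum_if_const sum_distrib_left)
  finally show "mat_mul k Pm Sm i j = Sm i j" by (simp add: psum sc Sm_def)
qed

lemma mm_T_Q: "mat_mul k Tm Qm = Zm"
  unfolding Qm_def mm_sub_right mm_T_P
  by (auto simp: fun_eq_iff mm_Dg_right Tm_def Zm_def pe)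

lemma mm_Q_S: "mat_mul k Qm Sm = Zm"
  unfolding Qm_def mm_sub_left mm_P_S
  by (auto simp: fun_eq_iff mm_Dg_left Sm_def Zm_def es)

lemma S_T: "madd (mat_mul 1 Sm Tm) Qm = Dg k e"
  by (auto simp: fun_eq_iff madd_def mat_mul_def Sm_def Tm_def Qm_def Pm_def Dg_def)

lemma ob_Q: "OB (k, Qm)"
  unfolding OB_def ob_def fst_conv snd_conv mm_Q_Q by (auto simp: rowz_def colz_def Qm_def Pm_def Dg_def)

lemma iso_sub: "ISO (rep k (E1 e)) (pl (E1 c) (k, Qm))"
proof -
  have E: "snd (E1 c) = blk 1 1 (snd (E1 c)) Zm Zm Zm"
    by (auto simp: E1_def blk_def Zm_def fun_eq_iff)
  have 1: "mat_mul k (blk 1 k Tm Zm Qm Zm) (Dg k e) = blk 1 k Tm Zm Qm Zm"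
    using mm_blk[of k 0 1 Tm Zm Qm Zm k "Dg k e" Zm Zm Zm] Dg_blk[of k e]
    by (simp add: mm_T_D mm_Q_D)
  have 2: "mat_mul (1 + k) (blk k 1 Sm Qm Zm Zm) (blk 1 1 (snd (E1 c)) Zm Zm Qm) = blk k 1 Sm Qm Zm Zm"
    using mm_blk[of 1 k k Sm Qm Zm Zm 1 "snd (E1 c)" Zm Zm Qm]
    by (simp add: mm_S_C mm_Q_Q del: One_nat_def)
  have 3: "mat_mul (1 + k) (blk k 1 Sm Qm Zm Zm) (blk 1 k Tm Zm Qm Zm) = Dg k e"
    using mm_blk[of 1 k k Sm Qm Zm Zm k Tm Zm Qm Zm] Dg_blk[of k e]
    by (simp add: mm_Q_Q S_T del: One_nat_def)
  have 4: "mat_mul k (blk 1 k Tm Zm Qm Zm) (blk k 1 Sm Qm Zm Zm) = blk 1 1 (snd (E1 c)) Zm Zm Qm"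
    using mm_blk[of k 0 1 Tm Zm Qm Zm 1 Sm Qm Zm Zm]
    by (simp add: mm_T_S mm_T_Q mm_Q_S mm_Q_Q)
  show ?thesis
    unfolding rep_E1 ISO_def iso_def pl_def
    by (rule exI[of _ "blk 1 k Tm Zm Qm Zm"], rule exI[of _ "blk k 1 Sm Qm Zm Zm"])
       (simp add: fst_E1 bd_blk 1 2 3 4 del: One_nat_def)
qed

end

lemma le_span: assumes e: "e * e = e" and c: "c * c = (c::'a::ring_1)"
  and cs: "c = (\<Sum>i<k. r i * e * t i)"
  shows "\<exists>d. OB d \<and> ISO (rep k (E1 e)) (pl (E1 c) d)"
proof -
  have ee': "\<And>x. e * (e * x) = e * x" using e by (simp add: mult.assoc[symmetric])
  define s where "s i = e * t i * c" for i
  define p where "p j = c * r j * e" for j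
  have "(\<Sum>l<k. p l * s l) = c * (\<Sum>i<k. r i * e * t i) * c"
    unfolding p_def s_def by (simp add: sum_distrib_left sum_distrib_right mult.assoc ee')
  then have ps: "(\<Sum>l<k. p l * s l) = c" using c cs by (simp add: mult.assoc)
  have es: "\<And>i. e * s i = s i" unfolding s_def using e by (simp add: mult.assoc[symmetric])
  have sc: "\<And>i. s i * c = s i" unfolding s_def using c by (simp add: mult.assoc)
  have cp: "\<And>j. c * p j = p j" unfolding p_def using c by (simp add: mult.assoc[symmetric])
  have pe: "\<And>j. p j * e = p j" unfolding p_def using e by (simp add: mult.assoc)
  show ?thesis
    using ob_Q[OF e c es sc cp pe ps] iso_sub[OF e c es sc cp pe ps] by blast
qed

lemma ring_cancel:
  assumes sep: "separative TYPE('a::ring_1)"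
    and tt: "t * t = (t::'a)" and yy: "y * y = y" and ww: "w * w = w"
    and ty: "t * y = 0" and yt: "y * t = 0" and tw: "t * w = 0" and wt: "w * t = 0"
    and X1: "X * (t + y) = X" and Y1: "Y * (t + w) = Y" and YX: "Y * X = t + y" and XY: "X * Y = t + w"
    and spy: "t = (\<Sum>i<(k::nat). r i * y * s i)" and spw: "t = (\<Sum>i<(k'::nat). r' i * w * s' i)"
  shows "\<exists>x z. x * y = x \<and> z * w = z \<and> z * x = y \<and> x * z = w"
proof -
  obtain d where d: "OB d" "ISO (rep k (E1 y)) (pl (E1 t) d)" using le_span[OF yy tt spy] by blast
  obtain d' where d': "OB d'" "ISO (rep k' (E1 w)) (pl (E1 t) d')" using le_span[OF ww tt spw] by blast
  have tyi: "(t + y) * (t + y) = t + y" using tt yy ty yt by (simp add: algebra_simps)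
  have twi: "(t + w) * (t + w) = t + w" using tt ww tw wt by (simp add: algebra_simps)
  have "ISO (pl (E1 t) (E1 y)) (E1 (t + y))" by (rule ISO_sym[OF ISO_orth[OF tt yy ty yt]])
  moreover have "ISO (E1 (t + y)) (E1 (t + w))" by (rule ISO_E1I[OF X1 Y1 YX XY])
  moreover have "ISO (E1 (t + w)) (pl (E1 t) (E1 w))" by (rule ISO_orth[OF tt ww tw wt])
  ultimately have h: "ISO (pl (E1 t) (E1 y)) (pl (E1 t) (E1 w))" by (metis ISO_trans)
  have "ISO (E1 y) (E1 w)"
    by (rule cancel[OF sep OB_E1[OF yy] OB_E1[OF ww] OB_E1[OF tt] d(1) d'(1) h d(2) d'(2)])
  then show ?thesis by (rule ISO_E1D)
qed

lemma assoc_app: "a * b = c \<Longrightarrow> a * (b * d) = c * (d::'a::ring_1)"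
  by (metis mult.assoc)

locale CA =
  fixes a u g :: "'a::ring_1"
  assumes uu: "u * u = 1" and gg: "g * g = g" and ug: "u * g = g * u" and ag: "a * (1 - g) = u * (1 - g)"
begin

definition "ub = u * (1 - g)"
definition "bt = (1 - g) * a * g"
definition "gm = g * a * g"

lemma gg': "g * (g * z) = g * z" using assoc_app[OF gg] .
lemma ug1: "(1 - g) * u = u * (1 - g)" by (simp add: algebra_simps ug)
lemma g1g: "g * (1 - g) = 0" "(1 - g) * g = 0" by (simp_all add: algebra_simps gg)
lemma g1g': "g * ((1 - g) * z) = 0" "(1 - g) * (g * z) = 0" using assoc_app[OF g1g(1)] assoc_app[OF g1g(2)] by simp_all
lemma g11: "(1 - g) * (1 - g) = 1 - g" by (simp add: algebra_simps gg)

lemma ub_ub: "ub * ub = 1 - g"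
proof -
  have "ub * ub = u * ((1 - g) * u) * (1 - g)" by (simp add: ub_def mult.assoc)
  also have "\<dots> = u * u * ((1 - g) * (1 - g))" by (simp add: ug1 mult.assoc)
  finally show ?thesis by (simp add: uu g11)
qed
lemma ub_ub': "ub * (ub * z) = (1 - g) * z" using assoc_app[OF ub_ub] .

lemma g_ub: "g * ub = 0"
proof -
  have "g * ub = g * ((1 - g) * u)" by (simp add: ub_def ug1)
  then show ?thesis by (simp add: g1g' )
qed
lemma ub_g: "ub * g = 0" by (simp add: ub_def mult.assoc g1g)
lemma g1_ub: "(1 - g) * ub = ub"
proof -
  have "(1 - g) * ub = (1 - g) * ((1 - g) * u)" by (simp add: ub_def ug1)
  also have "\<dots> = (1 - g) * u" by (simp add: mult.assoc[symmetric] g11)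
  finally show ?thesis by (simp add: ub_def ug1)
qed
lemma ub_g1: "ub * (1 - g) = ub" by (simp add: ub_def mult.assoc g11)

lemma ga1: "g * a * (1 - g) = 0"
proof -
  have "g * a * (1 - g) = g * (a * (1 - g))" by (simp add: mult.assoc)
  also have "\<dots> = g * ((1 - g) * u)" by (simp add: ag ug1)
  finally show ?thesis by (simp add: g1g')
qed

lemma ga: "g * a = gm"
proof -
  have "g * a = g * a * g + g * a * (1 - g)" by (simp add: algebra_simps)
  then show ?thesis by (simp add: ga1 gm_def)
qed

lemma a_dec: "a = ub + bt + gm"
proof -
  have "a = (1 - g) * a * (1 - g) + (1 - g) * a * g + g * a * (1 - g) + g * a * g"
    by (simp add: algebra_simps)
  also have "(1 - g) * a * (1 - g) = ub"
    by (simp add: mult.assoc ag ub_def mult.assoc[symmetric] ug1 g11)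
  finally show ?thesis by (simp add: ga1 bt_def gm_def)
qed

lemma g_gm: "g * gm = gm" by (simp add: gm_def mult.assoc[symmetric] gg)
lemma gm_g: "gm * g = gm" by (simp add: gm_def mult.assoc gg)
lemma g_bt: "g * bt = 0" by (simp add: bt_def mult.assoc[symmetric] g1g)
lemma bt_g: "bt * g = bt" by (simp add: bt_def mult.assoc gg)
lemma g1_bt: "(1 - g) * bt = bt" by (simp add: bt_def mult.assoc[symmetric] g11)
lemma bt_g1: "bt * (1 - g) = 0" by (simp add: bt_def mult.assoc g1g)
lemma bt_ub: "bt * ub = 0" by (simp add: bt_def ub_def mult.assoc g1g' flip: ug1)
lemma gm_ub: "gm * ub = 0" by (simp add: gm_def ub_def mult.assoc g1g' flip: ug1)
lemma g1a: "(1 - g) * a = ub + bt"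
  by (subst a_dec) (simp add: distrib_left g1_ub g1_bt gm_def mult.assoc[symmetric] g1g)
lemma a_ub: "a * ub = 1 - g"
  by (subst a_dec) (simp add: distrib_right ub_ub bt_ub gm_ub)
lemma a_g: "a * g = bt + gm"
  by (subst a_dec) (simp add: distrib_right ub_g bt_g gm_g)

end

locale CB = CA +
  fixes x e1 f1 w0 :: "'a::ring_1"
  assumes gx: "g * x = x" and xg: "x * g = x" and gxg: "gm * x * gm = gm"
    and e1e1: "e1 * e1 = e1" and f1f1: "f1 * f1 = f1" and e1f1: "e1 * f1 = 0" and f1e1: "f1 * e1 = 0"
    and ge1: "g * e1 = e1" and e1g: "e1 * g = e1" and gf1: "g * f1 = f1" and f1g: "f1 * g = f1"
    and ie1: "gm * x * e1 = e1" and e1i: "e1 * (gm * x) = gm * x"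
    and kf1: "(g - x * gm) * f1 = f1" and kw0: "(g - x * gm) * w0 = w0"
    and w0w0: "w0 * w0 = w0" and e1w0: "e1 * w0 = w0" and w0e1: "w0 * e1 = w0"
    and kdec: "g - x * gm = (w0 + f1) * (g - x * gm)"
    and W0: "\<And>z. gm * x * z = z \<Longrightarrow> (g - x * gm) * z = z \<Longrightarrow> w0 * z = z"
begin

definition "ka = g - x * gm"
definition "t = e1 - w0"
definition "y0 = g - e1 - f1"
definition "dl = (g - w0 - f1) * x * e1"

lemma gm_x_gm: "gm * (x * gm) = gm" using gxg by (simp add: mult.assoc)
lemma gm_ka: "gm * ka = 0" by (simp add: ka_def right_diff_distrib gm_g gm_x_gm)
lemma gm_ka': "gm * (ka * z) = 0" using assoc_app[OF gm_ka] by simp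
lemma gm_w0: "gm * w0 = 0" using kw0 gm_ka' by (metis ka_def)
lemma gm_f1: "gm * f1 = 0" using kf1 gm_ka' by (metis ka_def)
lemma w0f1: "w0 * f1 = 0" by (metis w0e1 e1f1 mult.assoc mult_zero_right)
lemma f1w0: "f1 * w0 = 0" by (metis e1w0 f1e1 mult.assoc mult_zero_left)
lemma gw0: "g * w0 = w0" by (metis e1w0 ge1 mult.assoc)
lemma w0g: "w0 * g = w0" by (metis w0e1 e1g mult.assoc)
lemma e1_gm: "e1 * gm = gm"
proof -
  have "e1 * (gm * x * gm) = gm * x * gm" using e1i by (simp add: mult.assoc[symmetric])
  then show ?thesis using gxg by simp
qed
lemma f1_gm: "f1 * gm = 0" by (metis e1_gm f1e1 mult.assoc mult_zero_left)
lemma x_gm: "x * gm = g - ka" by (simp add: ka_def)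

lemma gwf_wf: "(g - w0 - f1) * (w0 + f1) = 0"
  by (simp add: algebra_simps gw0 gf1 w0w0 f1f1 w0f1 f1w0)

lemma dl_gm: "dl * gm = g - w0 - f1"
proof -
  have "dl * gm = (g - w0 - f1) * (x * (e1 * gm))" by (simp add: dl_def mult.assoc)
  also have "\<dots> = (g - w0 - f1) * (g - ka)" by (simp add: e1_gm x_gm)
  also have "\<dots> = (g - w0 - f1) * g - (g - w0 - f1) * ((w0 + f1) * ka)"
    by (simp add: right_diff_distrib kdec[folded ka_def, symmetric])
  also have "\<dots> = g - w0 - f1"
    by (simp add: mult.assoc[symmetric] gwf_wf) (simp add: algebra_simps gg w0g f1g)
  finally show ?thesis .
qed

lemma gm_dl: "gm * dl = e1"
proof -
  have "gm * (g - w0 - f1) = gm" by (simp add: algebra_simps gm_g gm_w0 gm_f1)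
  then have "gm * dl = gm * x * e1" by (simp add: dl_def mult.assoc[symmetric])
  then show ?thesis by (simp add: ie1)
qed

lemma dl_e1: "dl * e1 = dl" by (simp add: dl_def mult.assoc e1e1)
lemma w0dl: "w0 * dl = 0"
proof -
  have "w0 * (g - w0 - f1) = 0" by (simp add: algebra_simps w0g w0w0 w0f1)
  then show ?thesis by (simp add: dl_def mult.assoc[symmetric])
qed
lemma f1dl: "f1 * dl = 0"
proof -
  have "f1 * (g - w0 - f1) = 0" by (simp add: algebra_simps f1g f1w0 f1f1)
  then show ?thesis by (simp add: dl_def mult.assoc[symmetric])
qed
lemma gdl: "g * dl = dl" by (simp add: dl_def mult.assoc[symmetric] right_diff_distrib gg gw0 gf1)
lemma dlg: "dl * g = dl" by (simp add: dl_def mult.assoc e1g)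

lemma y0w0: "y0 * w0 = 0" by (simp add: y0_def algebra_simps gw0 e1w0 f1w0)
lemma w0y0: "w0 * y0 = 0" by (simp add: y0_def algebra_simps w0g w0e1 w0f1)
lemma y0f1: "y0 * f1 = 0" by (simp add: y0_def algebra_simps gf1 e1f1 f1f1)
lemma f1y0: "f1 * y0 = 0" by (simp add: y0_def algebra_simps f1g f1e1 f1f1)
lemma e1y0: "e1 * y0 = 0" by (simp add: y0_def algebra_simps e1g e1e1 e1f1)
lemma y0e1: "y0 * e1 = 0" by (simp add: y0_def algebra_simps ge1 e1e1 f1e1)
lemma y0gm: "y0 * gm = 0" by (simp add: y0_def algebra_simps g_gm e1_gm f1_gm)
lemma gy0: "g * y0 = y0" by (simp add: y0_def algebra_simps gg ge1 gf1)
lemma y0g: "y0 * g = y0" by (simp add: y0_def algebra_simps gg e1g f1g)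

lemma dl_gm': "dl * (gm * z) = (g - w0 - f1) * z" using assoc_app[OF dl_gm] .
lemma gm_dl': "gm * (dl * z) = e1 * z" using assoc_app[OF gm_dl] .

end

context CB begin

lemma assemble:
  assumes s1: "sg * y0 = sg" and s2: "sg' * w0 = sg'" and s3: "sg' * sg = y0" and s4: "sg * sg' = w0"
  shows "special_clean a"
proof -
  have w0sg: "w0 * sg = sg" by (metis s1 s3 s4 mult.assoc)
  have y0sg': "y0 * sg' = sg'" by (metis s2 s3 s4 mult.assoc)
  have sgw0: "sg * w0 = 0" by (metis s1 y0w0 mult.assoc mult_zero_right)
  have sgf1: "sg * f1 = 0" by (metis s1 y0f1 mult.assoc mult_zero_right)
  have sge1: "sg * e1 = 0" by (metis s1 y0e1 mult.assoc mult_zero_right)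
  have sggm: "sg * gm = 0" by (metis s1 y0gm mult.assoc mult_zero_right)
  have f1sg: "f1 * sg = 0" by (metis w0sg f1w0 mult.assoc mult_zero_left)
  have e1sg: "e1 * sg = sg" by (metis w0sg e1w0 mult.assoc)
  have gmsg: "gm * sg = 0" by (metis w0sg gm_w0 mult.assoc mult_zero_left)
  have w0sg': "w0 * sg' = 0" by (metis y0sg' w0y0 mult.assoc mult_zero_left)
  have f1sg': "f1 * sg' = 0" by (metis y0sg' f1y0 mult.assoc mult_zero_left)
  have e1sg': "e1 * sg' = 0" by (metis y0sg' e1y0 mult.assoc mult_zero_left)
  have sg'f1: "sg' * f1 = 0" by (metis s2 w0f1 mult.assoc mult_zero_right)
  have sg'sg': "sg' * sg' = 0" by (metis s2 w0sg' mult.assoc mult_zero_right)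
  have gsg': "g * sg' = sg'" by (metis y0sg' gy0 mult.assoc)
  have sg'g: "sg' * g = sg'" by (metis s2 w0g mult.assoc)
  have gsg: "g * sg = sg" by (metis w0sg gw0 mult.assoc)
  have dlsg': "dl * sg' = 0" by (metis dl_e1 e1sg' mult.assoc mult_zero_right)
  have dlf1: "dl * f1 = 0" by (metis dl_e1 e1f1 mult.assoc mult_zero_right)
  define e where "e = sg' + w0 + f1"
  have ee: "e * e = e"
    by (simp add: e_def algebra_simps sg'sg' s2 sg'f1 w0sg' w0w0 w0f1 f1sg' f1w0 f1f1)
  define m where "m = dl - dl * sg - sg - f1"
  define nu where "nu = gm - e"
  have sg'dl: "sg' * dl = 0" by (metis s2 w0dl mult.assoc mult_zero_right)
  have e_dl: "e * dl = 0" by (simp add: e_def distrib_right w0dl f1dl sg'dl)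
  have e_sg: "e * sg = y0 + sg" by (simp add: e_def distrib_right s3 w0sg f1sg)
  have e_f1: "e * f1 = f1" by (simp add: e_def distrib_right sg'f1 w0f1 f1f1)
  have nu_m: "nu * m = g"
  proof -
    have "nu * m = gm * dl - gm * dl * sg - gm * sg - gm * f1 - e * dl + e * dl * sg + e * sg + e * f1"
      by (simp add: nu_def m_def algebra_simps)
    also have "\<dots> = g"
      by (simp add: gm_dl e_dl e_sg e_f1 gmsg gm_f1 e1sg y0_def)
    finally show ?thesis .
  qed
  have m_nu: "m * nu = g"
  proof -
    have "m * nu = dl * gm - dl * sg' - dl * w0 - dl * f1 - dl * sg * gm + dl * sg * sg' + dl * sg * w0
       + dl * sg * f1 - sg * gm + sg * sg' + sg * w0 + sg * f1 - f1 * gm + f1 * sg' + f1 * w0 + f1 * f1"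
      by (simp add: nu_def m_def e_def algebra_simps)
    also have "\<dots> = g"
      by (simp add: mult.assoc dl_gm dlsg' dlf1 sggm s4 sgw0 sgf1 f1_gm f1sg' f1w0 f1f1)
    finally show ?thesis .
  qed
  have ge: "g * e = e" by (simp add: e_def distrib_left gsg' gw0 gf1)
  have eg: "e * g = e" by (simp add: e_def distrib_right sg'g w0g f1g)
  have gm': "g * m = m" by (simp add: m_def algebra_simps gdl gsg gf1 mult.assoc[symmetric])
  have sgg: "sg * g = sg" by (metis s1 y0g mult.assoc)
  have mg: "m * g = m" by (simp add: m_def left_diff_distrib dlg mult.assoc sgg f1g)
  have gnu: "g * nu = nu" by (simp add: nu_def right_diff_distrib g_gm ge)
  have nug: "nu * g = nu" by (simp add: nu_def left_diff_distrib gm_g eg)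
  have ae: "a - e = ub + bt + nu" by (subst a_dec) (simp add: nu_def)
  define V where "V = ub + m - ub * bt * m"
  have ub_m: "ub * m = 0" by (metis gm' ub_g mult.assoc mult_zero_left)
  have nu_ub: "nu * ub = 0" by (metis nug ub_g[folded g_ub] g_ub mult.assoc mult_zero_right)
  have m_ub: "m * ub = 0" by (metis mg g_ub mult.assoc mult_zero_right)
  have m_bt: "m * bt = 0" by (metis mg g_bt mult.assoc mult_zero_right)
  have ub_nu: "ub * nu = 0" by (metis gnu ub_g mult.assoc mult_zero_left)
  have bt_m': "bt * m = bt * m" ..
  have u1: "(a - e) * V = 1"
  proof -
    have "(a - e) * V = ub * ub + ub * m - ub * ub * bt * m + bt * ub + bt * m - bt * ub * bt * m
        + nu * ub + nu * m - nu * ub * bt * m"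
      by (simp add: ae V_def algebra_simps)
    also have "\<dots> = 1"
      by (simp add: ub_ub ub_m bt_ub nu_ub nu_m mult.assoc ub_ub' g1_bt)
    finally show ?thesis .
  qed
  have u2: "V * (a - e) = 1"
  proof -
    have "V * (a - e) = ub * ub + ub * bt + ub * nu + m * ub + m * bt + m * nu
        - ub * bt * m * ub - ub * bt * m * bt - ub * bt * m * nu"
      by (simp add: ae V_def algebra_simps)
    also have "\<dots> = 1"
      by (simp add: ub_ub ub_nu m_ub m_bt m_nu mult.assoc bt_g)
    finally show ?thesis .
  qed
  have inter: "\<And>r r'. a * r = e * r' \<Longrightarrow> a * r = 0"
  proof -
    fix r r'
    assume h: "a * r = e * r'"
    have "g * (a * r) = a * r" using h ge by (simp add: mult.assoc[symmetric])
    then have X1: "a * r = gm * r" by (simp add: mult.assoc[symmetric] ga)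
    have "e1 * (a * r) = a * r" using X1 e1_gm by (simp add: mult.assoc[symmetric])
    moreover have "e1 * e = w0" by (simp add: e_def distrib_left e1sg' e1w0 e1f1)
    ultimately have X2: "a * r = w0 * r'" using h by (metis mult.assoc)
    have "y0 * e = sg'" by (simp add: e_def distrib_left y0sg' y0w0 y0f1)
    then have "y0 * (a * r) = sg' * r'" using h by (simp add: mult.assoc[symmetric])
    moreover have "y0 * (a * r) = 0" using X2 y0w0 by (simp add: mult.assoc[symmetric])
    ultimately have "sg' * r' = 0" by simp
    then have "w0 * r' = 0" using s4 by (metis mult.assoc mult_zero_right)
    then show "a * r = 0" using X2 by simp
  qed
  show ?thesis unfolding special_clean_def
  proof (intro exI conjI)
    show "idempotent e" using ee by (simp add: idempotent_def)
    show "unit_elem (a - e)" unfolding unit_elem_def using u1 u2 by blast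
    show "{a * r |r. True} \<inter> {e * r |r. True} = {0}"
    proof
      show "{a * r |r. True} \<inter> {e * r |r. True} \<subseteq> {0}" using inter by blast
      show "{0} \<subseteq> {a * r |r. True} \<inter> {e * r |r. True}"
        by (auto intro: exI[of _ 0])
    qed
  qed
qed

end

context CB begin

lemma tg: "t * g = t" by (simp add: t_def left_diff_distrib e1g w0g)
lemma tt: "t * t = t" by (simp add: t_def algebra_simps e1e1 e1w0 w0e1 w0w0)
lemma y0y0: "y0 * y0 = y0" by (simp add: y0_def algebra_simps gg ge1 gf1 e1g e1e1 e1f1 f1g f1e1 f1f1)
lemma ty0: "t * y0 = 0" by (simp add: t_def left_diff_distrib e1y0 w0y0)
lemma y0t: "y0 * t = 0" by (simp add: t_def right_diff_distrib y0e1 y0w0)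
lemma tw0: "t * w0 = 0" by (simp add: t_def left_diff_distrib e1w0 w0w0)
lemma w0t: "w0 * t = 0" by (simp add: t_def right_diff_distrib w0e1 w0w0)
lemma ty0_sum: "t + y0 = g - w0 - f1" by (simp add: t_def y0_def)
lemma tw0_sum: "t + w0 = e1" by (simp add: t_def)
lemma isoX: "gm * (t + y0) = gm" by (simp add: ty0_sum algebra_simps gm_g gm_w0 gm_f1)
lemma isoY: "dl * (t + w0) = dl" by (simp add: tw0_sum dl_e1)

lemma keyW: assumes h: "a * (a * y) = 0" shows "a * y = (g - ub * bt) * (w0 * (g * (a * y)))"
proof -
  define z where "z = a * y"
  have gz: "g * z = gm * y" by (simp add: z_def mult.assoc[symmetric] ga)
  have "gm * z = g * a * z - g * a * (1 - g) * z"
    by (simp add: gm_def algebra_simps)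
  have ga1': "\<And>w. g * (a * ((1 - g) * w)) = 0" by (metis ga1 mult.assoc mult_zero_left)
  then have gmz: "gm * z = 0" using h \<open>gm * z = _\<close> by (simp add: z_def mult.assoc)
  have gmgz: "gm * (g * z) = 0" using gmz by (simp add: mult.assoc[symmetric] gm_g)
  have iz: "gm * x * (g * z) = g * z" using gz gxg by (metis mult.assoc)
  have kz: "(g - x * gm) * (g * z) = g * z" by (simp add: left_diff_distrib gg' mult.assoc gmgz)
  have wz: "w0 * (g * z) = g * z" by (rule W0[OF iz kz])
  have "(1 - g) * a * z = 0" using h by (simp add: z_def mult.assoc)
  then have "ub * z + bt * z = 0" by (simp add: g1a distrib_right)
  moreover have "ub * z = ub * ((1 - g) * z)" by (simp add: mult.assoc[symmetric] ub_g1)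
  moreover have "bt * z = bt * (g * z)" by (simp add: mult.assoc[symmetric] bt_g)
  ultimately have "ub * ((1 - g) * z) = - (bt * (g * z))" by (simp add: eq_neg_iff_add_eq_0)
  then have "ub * (ub * ((1 - g) * z)) = - (ub * (bt * (g * z)))" by simp
  then have "(1 - g) * ((1 - g) * z) = - (ub * (bt * (g * z)))" by (simp only: ub_ub')
  then have z1: "(1 - g) * z = - (ub * (bt * (g * z)))" by (simp add: mult.assoc[symmetric] g11)
  have "z = g * z + (1 - g) * z" by (simp add: algebra_simps)
  also have "\<dots> = g * z - ub * (bt * (g * z))" by (simp add: z1)
  also have "\<dots> = (g - ub * bt) * (g * z)" by (simp add: left_diff_distrib gg' mult.assoc)
  finally show ?thesis using wz by (simp add: z_def)
qed

lemma keyY: assumes h: "y * (a * a) = 0" shows "y * a * y0 = y * a"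
proof -
  define z where "z = y * a"
  have z1: "z * (1 - g) = 0" using h by (simp add: z_def a_ub[symmetric] mult.assoc[symmetric])
  have zg: "z * g = z" using z1 by (simp add: algebra_simps)
  have zgm: "z * gm = 0"
  proof -
    have "z * gm = z * g * a * g" by (simp add: gm_def mult.assoc)
    also have "\<dots> = z * a * g" by (simp add: zg)
    also have "\<dots> = y * (a * a) * g" by (simp add: z_def mult.assoc)
    finally show ?thesis using h by simp
  qed
  have ze1: "z * e1 = 0" using ie1 zgm by (metis mult.assoc mult_zero_left)
  have kerk: "a * ((g - ub * bt) * ka) = 0"
  proof -
    have "a * ((g - ub * bt) * ka) = (a * g) * ka - (a * ub) * (bt * ka)"
      by (simp add: left_diff_distrib right_diff_distrib mult.assoc)
    also have "\<dots> = bt * ka - ((1 - g) * bt) * ka"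
      by (simp only: a_g a_ub distrib_right gm_ka add_0_right mult.assoc)
    also have "\<dots> = 0" by (simp only: g1_bt diff_self)
    finally show ?thesis .
  qed
  have zub: "z * ub = 0" using z1 g1_ub by (metis mult.assoc mult_zero_left)
  have gka: "g * ka = ka" by (simp add: ka_def right_diff_distrib gg gx mult.assoc[symmetric])
  have zka: "z * ka = 0"
  proof -
    have "g * ka = (g - ub * bt) * ka + ub * (bt * ka)" by (simp add: left_diff_distrib mult.assoc)
    then have "ka = (g - ub * bt) * ka + ub * (bt * ka)" by (simp add: gka)
    then have "z * ka = z * ((g - ub * bt) * ka + ub * (bt * ka))" by simp
    then have "z * ka = z * ((g - ub * bt) * ka) + (z * ub) * (bt * ka)"
      by (simp only: distrib_left mult.assoc)
    also have "\<dots> = 0" using kerk zub by (simp add: z_def mult.assoc)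
    finally show ?thesis .
  qed
  have zf1: "z * f1 = 0" using kf1 zka by (metis ka_def mult.assoc mult_zero_left)
  show ?thesis using zg ze1 zf1 by (simp add: z_def[symmetric] y0_def right_diff_distrib)
qed

lemma CB_main:
  assumes sep: "separative TYPE('a)"
    and HW: "g = (\<Sum>i<(k::nat). r i * z i * s i)" and hz: "\<forall>i<k. \<exists>y. z i = a * y \<and> a * (a * y) = 0"
    and HY: "g = (\<Sum>i<(k'::nat). r' i * z' i * s' i)" and hz': "\<forall>i<k'. \<exists>y. z' i = y * a \<and> y * (a * a) = 0"
  shows "special_clean a"
proof -
  have "t = t * g" by (simp add: tg)
  also have "\<dots> = (\<Sum>i<k. t * r i * z i * s i)" by (simp add: HW[symmetric] sum_distrib_left mult.assoc HW)
  also have "\<dots> = (\<Sum>i<k. (t * r i * (g - ub * bt)) * w0 * (g * (z i * s i)))"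
  proof (rule sum.cong)
    fix i assume "i \<in> {..<k}"
    then obtain y where y: "z i = a * y" "a * (a * y) = 0" using hz by auto
    have "z i = (g - ub * bt) * (w0 * (g * z i))" using keyW[OF y(2)] y(1) by simp
    then show "t * r i * z i * s i = (t * r i * (g - ub * bt)) * w0 * (g * (z i * s i))"
      by (metis mult.assoc)
  qed simp
  finally have tW: "t = (\<Sum>i<k. (t * r i * (g - ub * bt)) * w0 * (g * (z i * s i)))" .
  have "t = t * g" by (simp add: tg)
  also have "\<dots> = (\<Sum>i<k'. t * r' i * z' i * s' i)" by (simp add: HY[symmetric] sum_distrib_left mult.assoc HY)
  also have "\<dots> = (\<Sum>i<k'. (t * r' i * z' i) * y0 * s' i)"
  proof (rule sum.cong)
    fix i assume "i \<in> {..<k'}"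
    then obtain y where y: "z' i = y * a" "y * (a * a) = 0" using hz' by auto
    have "z' i * y0 = z' i" using keyY[OF y(2)] y(1) by simp
    then show "t * r' i * z' i * s' i = (t * r' i * z' i) * y0 * s' i"
      by (metis mult.assoc)
  qed simp
  finally have tY: "t = (\<Sum>i<k'. (t * r' i * z' i) * y0 * s' i)" .
  have YX: "dl * gm = t + y0" by (simp add: dl_gm ty0_sum)
  have XY: "gm * dl = t + w0" by (simp add: gm_dl tw0_sum)
  obtain sg sg' where "sg * y0 = sg" "sg' * w0 = sg'" "sg' * sg = y0" "sg * sg' = w0"
    using ring_cancel[OF sep tt y0y0 w0w0 ty0 y0t tw0 w0t isoX isoY YX XY tY tW] by blast
  then show ?thesis by (rule assemble)
qed

end

lemma orth:
  fixes g e f :: "'a::ring_1"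
  assumes reg: "\<And>z::'a. \<exists>y. z = z * y * z"
    and gg: "g * g = g" and ee: "e * e = e" and ff: "f * f = f"
    and ge: "g * e = e" and eg: "e * g = e" and gf: "g * f = f" and fg: "f * g = f"
    and dis: "\<forall>r s. e * r = f * s \<longrightarrow> f * s = 0"
  shows "\<exists>e1 f1. e1 * e1 = e1 \<and> f1 * f1 = f1 \<and> e1 * f1 = 0 \<and> f1 * e1 = 0 \<and> g * e1 = e1 \<and> e1 * g = e1
     \<and> g * f1 = f1 \<and> f1 * g = f1 \<and> e * e1 = e1 \<and> e1 * e = e \<and> f * f1 = f1 \<and> f1 * f = f"
proof -
  define c where "c = (g - e) * f"
  obtain c0 where c0: "c = c * c0 * c" using reg by blast
  define c' where "c' = g * c0 * g"
  have cg: "c * g = c" by (simp add: c_def mult.assoc fg)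
  have gc: "g * c = c" by (simp add: c_def mult.assoc[symmetric] right_diff_distrib gg ge)
  have ccc: "c * (c' * c) = c"
  proof -
    have "c * (c' * c) = (c * g) * c0 * (g * c)" by (simp add: c'_def mult.assoc)
    then show ?thesis using c0 by (simp add: cg gc)
  qed
  have fcc: "f * (c' * c) = f"
  proof -
    define r0 where "r0 = g - c' * c"
    have "c * r0 = 0" by (simp add: r0_def right_diff_distrib cg ccc)
    then have "(g - e) * (f * r0) = 0" by (simp add: c_def mult.assoc)
    moreover have "g * (f * r0) = f * r0" by (simp add: mult.assoc[symmetric] gf)
    ultimately have "f * r0 - e * (f * r0) = 0" by (simp only: left_diff_distrib)
    then have "e * (f * r0) = f * r0" by simp
    then have "f * r0 = 0" using dis by blast
    then show ?thesis by (simp add: r0_def right_diff_distrib fg)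
  qed
  define d where "d = c * c'"
  define D where "D = d * (g - e)"
  define f1 where "f1 = f * c' * D"
  define e1 where "e1 = e - e * f1"
  have ec: "e * c = 0" by (simp add: c_def mult.assoc[symmetric] right_diff_distrib ee eg)
  have eD: "e * D = 0" by (simp add: D_def d_def mult.assoc[symmetric] ec)
  have De: "D * e = 0" by (simp add: D_def mult.assoc left_diff_distrib ge ee)
  have Df: "D * f = c" by (simp add: D_def d_def mult.assoc c_def[symmetric] ccc)
  have Dg: "D * g = D" by (simp add: D_def mult.assoc left_diff_distrib gg eg)
  have f1f: "f1 * f = f" by (simp add: f1_def mult.assoc Df fcc)
  have f1f1: "f1 * f1 = f1"
  proof -
    have "f1 * f1 = (f1 * f) * c' * D" by (simp add: f1_def mult.assoc)
    also have "\<dots> = f * c' * D" by (simp only: f1f)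
    finally show ?thesis by (simp add: f1_def)
  qed
  have ff1: "f * f1 = f1" by (simp add: f1_def mult.assoc[symmetric] ff)
  have f1e: "f1 * e = 0" by (simp add: f1_def mult.assoc De)
  have ef1e: "e * f1 * e = 0" by (simp add: mult.assoc f1e)
  have ee1: "e * e1 = e1" by (simp add: e1_def right_diff_distrib mult.assoc[symmetric] ee)
  have e1e: "e1 * e = e" by (simp add: e1_def left_diff_distrib ee mult.assoc f1e)
  have e1f1: "e1 * f1 = 0" by (simp add: e1_def left_diff_distrib mult.assoc f1f1)
  have f1e1: "f1 * e1 = 0" by (simp add: e1_def right_diff_distrib mult.assoc[symmetric] f1e)
  have e1e1: "e1 * e1 = e1"
    by (simp add: e1_def algebra_simps ee f1e f1f1) (simp add: mult.assoc[symmetric] ee, simp add: mult.assoc f1e)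
  have f1g: "f1 * g = f1" by (simp add: f1_def mult.assoc Dg)
  have gf1: "g * f1 = f1" by (simp add: f1_def mult.assoc[symmetric] gf)
  have ge1: "g * e1 = e1" by (simp add: e1_def right_diff_distrib mult.assoc[symmetric] ge)
  have e1g: "e1 * g = e1" by (simp add: e1_def left_diff_distrib eg mult.assoc f1g)
  show ?thesis
    by (intro exI[of _ e1] exI[of _ f1]) (simp add: e1e1 f1f1 e1f1 f1e1 ge1 e1g gf1 f1g ee1 e1e ff1 f1f)
qed

context CA begin

lemma decomp:
  assumes reg: "\<And>z::'a. \<exists>y. z = z * y * z"
  shows "\<exists>x e1 f1 w0. CB a u g x e1 f1 w0"
proof -
  obtain x0 where x0: "gm = gm * x0 * gm" using reg by blast
  define x where "x = g * x0 * g"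
  have gx: "g * x = x" by (simp add: x_def mult.assoc[symmetric] gg)
  have xg: "x * g = x" by (simp add: x_def mult.assoc gg)
  have gxg: "gm * x * gm = gm"
  proof -
    have "gm * x * gm = (gm * g) * x0 * (g * gm)" by (simp add: x_def mult.assoc)
    then show ?thesis using x0 by (simp add: gm_g g_gm)
  qed
  define io where "io = gm * x"
  define ka where "ka = g - x * gm"
  have ioio: "io * io = io" by (simp add: io_def mult.assoc[symmetric] gxg)
  have gio: "g * io = io" by (simp add: io_def mult.assoc[symmetric] g_gm)
  have iog: "io * g = io" by (simp add: io_def mult.assoc xg)
  have iogm: "io * gm = gm" by (simp add: io_def gxg)
  have gmka: "gm * ka = 0" by (simp add: ka_def right_diff_distrib gm_g mult.assoc[symmetric] gxg)
  have gka: "g * ka = ka" by (simp add: ka_def right_diff_distrib gg mult.assoc[symmetric] gx)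
  have kag: "ka * g = ka" by (simp add: ka_def left_diff_distrib gg mult.assoc gm_g)
  have xgmx: "x * gm * x * gm = x * gm" by (simp add: mult.assoc gxg[unfolded mult.assoc])
  have kaka: "ka * ka = ka"
    by (simp add: ka_def algebra_simps gg gx gm_g) (simp add: mult.assoc[symmetric] gxg gm_g gx)
  define c where "c = (g - ka) * io"
  obtain c' where c': "c = c * c' * c" using reg by blast
  define v where "v = io * (1 - c' * c)"
  obtain v' where v': "v = v * v' * v" using reg by blast
  define w0' where "w0' = v * v'"
  have iov: "io * v = v" by (simp add: v_def mult.assoc[symmetric] ioio)
  have gv: "g * v = v" by (simp add: v_def mult.assoc[symmetric] gio)
  have gkv: "(g - ka) * v = 0"
  proof -
    have "(g - ka) * v = c * (1 - c' * c)" by (simp add: v_def c_def mult.assoc)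
    also have "\<dots> = c - c * c' * c" by (simp add: right_diff_distrib mult.assoc)
    finally show ?thesis using c' by simp
  qed
  have kav: "ka * v = v" using gkv gv by (simp add: left_diff_distrib)
  have w0w0': "w0' * w0' = w0'" using v' by (simp add: w0'_def mult.assoc) (metis mult.assoc)
  have iow0': "io * w0' = w0'" by (simp add: w0'_def mult.assoc[symmetric] iov)
  have kaw0': "ka * w0' = w0'" by (simp add: w0'_def mult.assoc[symmetric] kav)
  have w0'v: "w0' * v = v" using v' by (simp add: w0'_def mult.assoc)
  have W0': "\<And>z. io * z = z \<Longrightarrow> ka * z = z \<Longrightarrow> w0' * z = z"
  proof -
    fix z assume iz: "io * z = z" and kz: "ka * z = z"
    have gz: "g * z = z" using iz gio by (metis mult.assoc)
    have "c * z = (g - ka) * z" by (simp add: c_def mult.assoc iz)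
    then have cz: "c * z = 0" by (simp add: left_diff_distrib gz kz)
    have "z = io * z" using iz by simp
    also have "\<dots> = v * z + io * (c' * (c * z))" by (simp add: v_def algebra_simps)
    finally have zv: "z = v * z" using cz by simp
    have "w0' * z = (w0' * v) * z" using zv by (metis mult.assoc)
    then show "w0' * z = z" using zv w0'v by simp
  qed
  define k1 where "k1 = ka - w0' * ka"
  have kw: "ka * w0' = w0'" by (rule kaw0')
  have k1k1: "k1 * k1 = k1"
  proof -
    have "k1 * k1 = ka * ka - (ka * w0') * ka - w0' * (ka * ka) + w0' * (ka * w0') * ka"
      by (simp add: k1_def algebra_simps)
    also have "\<dots> = ka - w0' * ka" by (simp add: kaka kw w0w0')
    finally show ?thesis by (simp add: k1_def)
  qed
  have gw0': "g * w0' = w0'" by (metis gka kaw0' mult.assoc)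
  have gk1: "g * k1 = k1" by (simp add: k1_def right_diff_distrib gka mult.assoc[symmetric] gw0')
  have k1g: "k1 * g = k1" by (simp add: k1_def left_diff_distrib kag mult.assoc)
  have w0k1: "w0' * k1 = 0" by (simp add: k1_def right_diff_distrib mult.assoc[symmetric] w0w0')
  have kak1: "ka * k1 = k1" by (simp add: k1_def right_diff_distrib kaka mult.assoc[symmetric] kw)
  have dis: "\<forall>r s. io * r = k1 * s \<longrightarrow> k1 * s = 0"
  proof (intro allI impI)
    fix r s assume h: "io * r = k1 * s"
    have "io * (k1 * s) = k1 * s" using h ioio by (metis mult.assoc)
    moreover have "ka * (k1 * s) = k1 * s" using kak1 by (metis mult.assoc)
    ultimately have "w0' * (k1 * s) = k1 * s" by (rule W0')
    then show "k1 * s = 0" using w0k1 by (metis mult.assoc mult_zero_left)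
  qed
  obtain e1 f1 where o: "e1 * e1 = e1" "f1 * f1 = f1" "e1 * f1 = 0" "f1 * e1 = 0" "g * e1 = e1" "e1 * g = e1"
     "g * f1 = f1" "f1 * g = f1" "io * e1 = e1" "e1 * io = io" "k1 * f1 = f1" "f1 * k1 = k1"
    using orth[of g io k1, OF reg gg ioio k1k1 gio iog gk1 k1g dis] by blast
  define w0 where "w0 = w0' * e1"
  have e1w0': "e1 * w0' = w0'" by (metis iow0' o(10) mult.assoc)
  show ?thesis
  proof (rule exI[of _ x], rule exI[of _ e1], rule exI[of _ f1], rule exI[of _ w0])
    show "CB a u g x e1 f1 w0"
    proof (rule CB.intro[OF CA.intro[OF uu gg ug ag]], rule CB_axioms.intro)
      show "g * x = x" "x * g = x" "gm * x * gm = gm" by (fact gx xg gxg)+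
      show "e1 * e1 = e1" "f1 * f1 = f1" "e1 * f1 = 0" "f1 * e1 = 0" "g * e1 = e1" "e1 * g = e1"
        "g * f1 = f1" "f1 * g = f1" by (fact o)+
      show "gm * x * e1 = e1" using o(9) by (simp add: io_def)
      show "e1 * (gm * x) = gm * x" using o(10) by (simp add: io_def)
      show "(g - x * gm) * f1 = f1" using o(11) kak1 by (metis ka_def mult.assoc)
      show "(g - x * gm) * w0 = w0" by (simp add: w0_def mult.assoc[symmetric] kaw0'[unfolded ka_def])
      show "w0 * w0 = w0"
      proof -
        have "w0 * w0 = w0' * (e1 * w0') * e1" by (simp add: w0_def mult.assoc)
        also have "\<dots> = w0' * e1" by (simp add: e1w0' w0w0')
        finally show ?thesis by (simp add: w0_def)
      qed
      show "e1 * w0 = w0" by (simp add: w0_def mult.assoc[symmetric] e1w0')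
      show "w0 * e1 = w0" by (simp add: w0_def mult.assoc o(1))
      have fw: "f1 * w0' = 0" by (metis e1w0' o(4) mult.assoc mult_zero_left)
      have ww: "w0 * w0' = w0'" by (simp add: w0_def mult.assoc e1w0' w0w0')
      have wk: "w0 * k1 = 0" by (metis o(12) w0_def o(3) mult.assoc mult_zero_left mult_zero_right)
      have kd: "ka = w0' * ka + k1" by (simp add: k1_def)
      have "(w0 + f1) * ka = (w0 + f1) * (w0' * ka) + (w0 + f1) * k1" by (subst kd) (simp add: distrib_left)
      also have "\<dots> = w0' * ka + k1" by (simp add: distrib_right mult.assoc[symmetric] ww fw wk o(12))
      finally show "g - x * gm = (w0 + f1) * (g - x * gm)" using kd by (simp add: ka_def)
      show "w0 * z = z" if iz: "gm * x * z = z" and kz: "(g - x * gm) * z = z" for z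
      proof -
        have "e1 * z = z" using iz o(10) by (metis io_def mult.assoc)
        moreover have "w0' * z = z" using W0'[of z] iz kz by (simp add: io_def ka_def)
        ultimately show ?thesis by (simp add: w0_def mult.assoc)
      qed
    qed
  qed
qed

end

lemma ts_mem: "s \<in> S \<Longrightarrow> (s::'a::ring_1) \<in> tsideal_gen S"
  unfolding tsideal_gen_def
  by (rule CollectI, rule exI[of _ 1], rule exI[of _ "\<lambda>_. 1"], rule exI[of _ "\<lambda>_. s"], rule exI[of _ "\<lambda>_. 1"]) simp

lemma ts_add: assumes "x \<in> tsideal_gen S" "y \<in> tsideal_gen S" shows "(x::'a::ring_1) + y \<in> tsideal_gen S"
proof -
  obtain k :: nat and r s t where 1: "\<forall>i<k. s i \<in> S" "x = (\<Sum>i<k. r i * s i * t i)" using assms(1) unfolding tsideal_gen_def by auto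
  obtain k' :: nat and r' s' t' where 2: "\<forall>i<k'. s' i \<in> S" "y = (\<Sum>i<k'. r' i * s' i * t' i)" using assms(2) unfolding tsideal_gen_def by auto
  define R where "R i = (if i < k then r i else r' (i - k))" for i
  define S' where "S' i = (if i < k then s i else s' (i - k))" for i
  define T where "T i = (if i < k then t i else t' (i - k))" for i
  have A: "x + y = (\<Sum>i<k + k'. R i * S' i * T i)"
    unfolding sum_split_add 1 2 R_def S'_def T_def by simp
  have B: "\<forall>i<k + k'. S' i \<in> S" using 1 2 unfolding S'_def by auto
  show ?thesis unfolding tsideal_gen_def
    by (rule CollectI, rule exI[of _ "k + k'"], rule exI[of _ R], rule exI[of _ S'], rule exI[of _ T], rule conjI[OF B A])
qed

lemma ts_lmul: assumes "x \<in> tsideal_gen S" shows "(y::'a::ring_1) * x \<in> tsideal_gen S"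
proof -
  obtain k :: nat and r s t where 1: "\<forall>i<k. s i \<in> S" "x = (\<Sum>i<k. r i * s i * t i)" using assms(1) unfolding tsideal_gen_def by auto
  have A: "y * x = (\<Sum>i<k. (y * r i) * s i * t i)" by (simp add: 1 sum_distrib_left mult.assoc)
  show ?thesis unfolding tsideal_gen_def
    by (rule CollectI, rule exI[of _ k], rule exI[of _ "\<lambda>i. y * r i"], rule exI[of _ s], rule exI[of _ t], rule conjI[OF 1(1) A])
qed

lemma ts_rmul: assumes "x \<in> tsideal_gen S" shows "x * (y::'a::ring_1) \<in> tsideal_gen S"
proof -
  obtain k :: nat and r s t where 1: "\<forall>i<k. s i \<in> S" "x = (\<Sum>i<k. r i * s i * t i)" using assms(1) unfolding tsideal_gen_def by auto
  have A: "x * y = (\<Sum>i<k. r i * s i * (t i * y))" by (simp add: 1 sum_distrib_right mult.assoc)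
  show ?thesis unfolding tsideal_gen_def
    by (rule CollectI, rule exI[of _ k], rule exI[of _ r], rule exI[of _ s], rule exI[of _ "\<lambda>i. t i * y"], rule conjI[OF 1(1) A])
qed

lemma num2c: "2 * x = x * (2::'a::ring_1)" by (simp add: mult_2 mult_2_right)

lemma main_front:
  fixes a :: "'a::ring_1"
  assumes reg: "\<And>z::'a. \<exists>y. z = z * y * z"
    and two: "unit_elem (2::'a)"
  shows "\<exists>u g. CA a u g \<and> g \<in> tsideal_gen {1 - a^2}"
proof -
  obtain h where h: "2 * h = (1::'a)" "h * 2 = 1" using two unfolding unit_elem_def by blast
  have hc: "\<And>x. x * h = h * x"
  proof -
    fix x :: 'a
    have "x * h = (h * 2) * (x * h)" using h by simp
    also have "\<dots> = h * ((x * h) * 2)" by (simp add: mult.assoc num2c[of "x * h"])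
    also have "\<dots> = h * x" by (simp add: mult.assoc h)
    finally show "x * h = h * x" .
  qed
  define H where "H = h * h"
  have H4: "H * 4 = 1"
  proof -
    have "H * 4 = h * (h * 2) * 2" by (simp add: H_def mult.assoc)
    then show ?thesis using h by simp
  qed
  define q where "q = h * (1 + a)"
  have q2: "2 * q = 1 + a" by (simp only: q_def mult.assoc[symmetric] h(1) mult_1_left)
  have q3: "2 * (1 - q) = 1 - a" by (simp add: right_diff_distrib q2)
  have "(2 * q) * (2 * (1 - q)) = 1 - a * a" by (simp only: q2 q3) (simp add: algebra_simps)
  moreover have "(2 * q) * (2 * (1 - q)) = 4 * (q * (1 - q))"
  proof -
    have A: "(2 * q) * (2 * (1 - q)) = 2 * (q * ((1 - q) * 2))" by (simp only: mult.assoc num2c[of "1 - q"])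
    have B: "q * ((1 - q) * 2) = 2 * (q * (1 - q))"
      by (simp only: num2c[of "q * (1 - q)"] mult.assoc)
    have C: "2 * (2 * (q * (1 - q))) = 4 * (q * (1 - q))" by (simp add: mult.assoc[symmetric])
    show ?thesis by (simp only: A B C)
  qed
  ultimately have q4: "4 * (q * (1 - q)) = 1 - a * a" by simp
  have qq: "q * (1 - q) = H * (1 - a * a)"
  proof -
    have "q * (1 - q) = (H * 4) * (q * (1 - q))" by (simp add: H4)
    also have "\<dots> = H * (1 - a * a)" by (simp only: mult.assoc q4)
    finally show ?thesis .
  qed
  obtain z where z: "1 - q = (1 - q) * z * (1 - q)" using reg by blast
  define f where "f = (1 - q) * z"
  define p where "p = q * (1 - f)"
  have ff: "f * f = f"
  proof -
    have "f * f = ((1 - q) * z * (1 - q)) * z" by (simp add: f_def mult.assoc)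
    then show ?thesis using z by (simp add: f_def)
  qed
  have f1q: "f * (1 - q) = 1 - q" using z by (simp add: f_def)
  have "(1 - f) * (1 - q) = 0" using f1q by (simp add: left_diff_distrib)
  then have fq: "(1 - f) * q = 1 - f" by (simp add: right_diff_distrib)
  have pp: "p * p = p"
  proof -
    have "p * p = q * ((1 - f) * q) * (1 - f)" by (simp add: p_def mult.assoc)
    also have "\<dots> = q * ((1 - f) * (1 - f))" by (simp add: fq mult.assoc)
    also have "(1 - f) * (1 - f) = 1 - f" by (simp add: algebra_simps ff)
    finally show ?thesis by (simp add: p_def)
  qed
  define u where "u = p + p - 1"
  have uu: "u * u = 1" by (simp add: u_def algebra_simps pp)
  have peq: "p = q - H * (1 - a * a) * z"
  proof -
    have "p = q - q * ((1 - q) * z)" by (simp add: p_def f_def right_diff_distrib)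
    also have "q * ((1 - q) * z) = H * (1 - a * a) * z" by (simp only: mult.assoc[symmetric] qq)
    finally show ?thesis .
  qed
  have ueq: "u = a - (2 * H) * (1 - a * a) * z"
  proof -
    have "u = 2 * q - 1 - 2 * (H * (1 - a * a) * z)" by (simp add: u_def peq mult_2)
    then show ?thesis using q2 by (simp add: mult.assoc)
  qed
  define b where "b = u * a"
  have ua: "u * a = a * a - (2 * H) * (1 - a * a) * (z * a)"
    by (simp only: ueq left_diff_distrib mult.assoc)
  have gen: "\<And>X Y::'a. 1 - (Y - X) = 1 * (1 - Y) * 1 + X" by (simp add: algebra_simps)
  have b1: "1 - b = 1 * (1 - a^2) * 1 + (2 * H) * (1 - a^2) * (z * a)"
    unfolding b_def ua power2_eq_square by (rule gen)
  have bI: "1 - b \<in> tsideal_gen {1 - a^2}"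
    unfolding b1 by (intro ts_add ts_lmul ts_rmul ts_mem) simp_all
  have ub: "u * b = a" by (simp add: b_def mult.assoc[symmetric] uu)
  define c1 where "c1 = (1 - b) * p"
  obtain y1 where y1: "c1 = c1 * y1 * c1" using reg by blast
  have y1': "c1 * (y1 * c1) = c1" using y1[symmetric] by (simp add: mult.assoc)
  define c2 where "c2 = (1 - b) * (1 - p)"
  obtain y2 where y2: "c2 = c2 * y2 * c2" using reg by blast
  have y2': "c2 * (y2 * c2) = c2" using y2[symmetric] by (simp add: mult.assoc)
  define g1 where "g1 = p * y1 * c1"
  define g2 where "g2 = (1 - p) * y2 * c2"
  define g where "g = g1 + g2"
  have p1p: "(1 - p) * (1 - p) = 1 - p" by (simp add: algebra_simps pp)
  have c1p: "c1 * p = c1" by (simp add: c1_def mult.assoc pp)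
  have c2p: "c2 * (1 - p) = c2" by (simp add: c2_def mult.assoc p1p)
  have g1g1: "g1 * g1 = g1"
  proof -
    have "g1 * g1 = p * y1 * ((c1 * p) * y1 * c1)" by (simp add: g1_def mult.assoc)
    then show ?thesis by (simp add: c1p g1_def mult.assoc y1')
  qed
  have g2g2: "g2 * g2 = g2"
  proof -
    have "g2 * g2 = (1 - p) * y2 * ((c2 * (1 - p)) * y2 * c2)" by (simp add: g2_def mult.assoc)
    then show ?thesis by (simp add: c2p g2_def mult.assoc y2')
  qed
  have pg1: "p * g1 = g1" by (simp add: g1_def mult.assoc[symmetric] pp)
  have g1p: "g1 * p = g1" by (simp add: g1_def mult.assoc c1p)
  have pg2': "(1 - p) * g2 = g2" by (simp add: g2_def mult.assoc[symmetric] p1p)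
  have g2p': "g2 * (1 - p) = g2" by (simp add: g2_def mult.assoc c2p)
  have p1p0: "p * (1 - p) = 0" "(1 - p) * p = 0" by (simp_all add: algebra_simps pp)
  have g1g2: "g1 * g2 = 0" by (metis g1p pg2' p1p0(1) mult.assoc mult_zero_left mult_zero_right)
  have g2g1: "g2 * g1 = 0" by (metis pg1 g2p' p1p0(2) mult.assoc mult_zero_left mult_zero_right)
  have gg: "g * g = g" by (simp add: g_def algebra_simps g1g1 g2g2 g1g2 g2g1)
  have pg2: "p * g2 = 0" by (metis pg2' p1p0(1) mult.assoc mult_zero_left)
  have g2p: "g2 * p = 0" by (metis g2p' p1p0(2) mult.assoc mult_zero_right)
  have pg: "p * g = g * p" by (simp add: g_def algebra_simps pg1 g1p pg2 g2p)
  have ug: "u * g = g * u" by (simp add: u_def algebra_simps pg)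
  have bg1: "(1 - b) * g1 = c1"
  proof -
    have "(1 - b) * g1 = c1 * y1 * c1" by (simp add: g1_def c1_def mult.assoc)
    then show ?thesis by (simp add: mult.assoc y1')
  qed
  have bg2: "(1 - b) * g2 = c2"
  proof -
    have "(1 - b) * g2 = c2 * y2 * c2" by (simp add: g2_def c2_def mult.assoc)
    then show ?thesis by (simp add: mult.assoc y2')
  qed
  have bg: "(1 - b) * g = 1 - b"
  proof -
    have "(1 - b) * g = c1 + c2" by (simp only: g_def distrib_left bg1 bg2)
    also have "c1 + c2 = 1 - b" by (simp add: c1_def c2_def right_diff_distrib)
    finally show ?thesis .
  qed
  have "(1 - b) * (1 - g) = 0" using bg by (simp add: right_diff_distrib)
  then have b1g: "b * (1 - g) = 1 - g" by (simp add: left_diff_distrib)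
  have ag: "a * (1 - g) = u * (1 - g)" by (metis ub b1g mult.assoc)
  have gI: "g \<in> tsideal_gen {1 - a^2}"
  proof -
    have "g1 = (p * y1) * (1 - b) * p" by (simp add: g1_def c1_def mult.assoc)
    then have 1: "g1 \<in> tsideal_gen {1 - a^2}" using ts_rmul[OF ts_lmul[OF bI]] by simp
    have "g2 = ((1 - p) * y2) * (1 - b) * (1 - p)" by (simp add: g2_def c2_def mult.assoc)
    then have 2: "g2 \<in> tsideal_gen {1 - a^2}" using ts_rmul[OF ts_lmul[OF bI]] by simp
    show ?thesis unfolding g_def by (rule ts_add[OF 1 2])
  qed
  have cag: "CA a u g" by (rule CA.intro[OF uu gg ug ag])
  show ?thesis by (rule exI[where x=u], rule exI[where x=g], rule conjI[OF cag gI])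
qed

theorem corollary3p8:
  fixes a :: "'a::ring_1"
  assumes "separative TYPE('a)"
    and "regular_ring TYPE('a)"
    and "unit_elem (2::'a)"
    and "tsideal_gen ((\<lambda>y. a * y) ` r_ann (a^2)) = tsideal_gen ((\<lambda>y. y * a) ` l_ann (a^2))"
    and "tsideal_gen ((\<lambda>y. y * a) ` l_ann (a^2)) = tsideal_gen {1 - a^2}"
  shows "special_clean a"
proof -
  have reg: "\<And>z::'a. \<exists>y. z = z * y * z" using assms(2) unfolding regular_ring_def by blast
  obtain u g where ca: "CA a u g" and gI: "g \<in> tsideal_gen {1 - a^2}"
    using main_front[OF reg assms(3)] by blast
  obtain x e1 f1 w0 where cb: "CB a u g x e1 f1 w0" using CA.decomp[OF ca reg] by blast
  have gW: "g \<in> tsideal_gen ((\<lambda>y. a * y) ` r_ann (a^2))" using gI assms(4,5) by simp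
  have gY: "g \<in> tsideal_gen ((\<lambda>y. y * a) ` l_ann (a^2))" using gI assms(5) by simp
  obtain k :: nat and r z t where W: "\<forall>i<k. z i \<in> (\<lambda>y. a * y) ` r_ann (a^2)" "g = (\<Sum>i<k. r i * z i * t i)"
    using gW unfolding tsideal_gen_def by auto
  obtain k' :: nat and r' z' t' where Y: "\<forall>i<k'. z' i \<in> (\<lambda>y. y * a) ` l_ann (a^2)" "g = (\<Sum>i<k'. r' i * z' i * t' i)"
    using gY unfolding tsideal_gen_def by auto
  have hz: "\<forall>i<k. \<exists>y. z i = a * y \<and> a * (a * y) = 0"
    using W(1) by (auto simp: r_ann_def power2_eq_square mult.assoc)
  have hz': "\<forall>i<k'. \<exists>y. z' i = y * a \<and> y * (a * a) = 0"
    using Y(1) by (auto simp: l_ann_def power2_eq_square)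
  show ?thesis by (rule CB.CB_main[OF cb assms(1) W(2) hz Y(2) hz'])
qed

end
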